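(* Let $\mathcal{A}$ be an additive category, let $\mathcal{D}$ be a left weakly exact structure on $\mathcal{A}$ and let $I$ be a right weakly exact structure on $\mathcal{A}$. Then the class $\mathcal{W}$ of all kernel-cokernel pairs $A\xrightarrow{i}B\xrightarrow{d}C$ in $\mathcal{A}$ with $i\in I$ and $d\in\mathcal{D}$ is a weakly exact structure on $\mathcal{A}$.
   Context: Let $\mathcal{A}$ be an additive category. A kernel-cokernel pair (short exact sequence) is a pair of composable morphisms $A\xrightarrow{i}B\xrightarrow{d}C$ with $i$ a kernel of $d$ and $d$ a cokernel of $i$. A weakly exact structure on $\mathcal{A}$ is a class $\mathcal{W}$ of kernel-cokernel pairs, closed under isomorphisms of sequences and under finite direct sums of sequences, such that, calling $i$ an admissible monic (resp. $d$ an admissible epic) if $(i,d)\in\mathcal{W}$ for some $d$ (resp. some $i$): (E0) $1_A$ is an admissible monic for every object $A$; (E0)$^{op}$ $1_A$ is an admissible epic for every object $A$; (E2) for every admissible monic $i:A\to B$ and every morphism $t:A\to C$ the pushout of $i$ along $t$ exists and the resulting morphism $C\to S$ is an admissible monic; (E2)$^{op}$ for every admissible epic $h:A\to C$ and every morphism $t:B\to C$ the pullback of $h$ along $t$ exists and the resulting morphism $P\to B$ is an admissible epic. A right weakly exact structure on $\mathcal{A}$ is a class $I$ of morphisms that are kernels (of some morphism), closed under isomorphisms (of arrows), such that: (Id) for every object $X$, $1_X\in I$ and $0\to X$ is in $I$; (P) for every $f:X\to Y$ in $I$ and every morphism $h:X\to X'$ the pushout of $f$ along $h$ exists and the resulting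 morphism $f':X'\to Y'$ lies in $I$; (Q) if $A\xrightarrow{a}B\xrightarrow{b}C$ with $ba\in I$ and $a$ has a cokernel, then $a\in I$; (S) $I$ is closed under direct sums of morphisms. A left weakly exact structure is a class $\mathcal{D}$ of morphisms that are cokernels, closed under isomorphisms, satisfying the dual conditions: (Id$^{op}$) $1_X\in\mathcal{D}$ and $X\to 0$ is in $\mathcal{D}$ for all $X$; (P$^{op}$) pullbacks of morphisms in $\mathcal{D}$ along arbitrary morphisms exist and yield morphisms in $\mathcal{D}$; (Q$^{op}$) if $ba\in\mathcal{D}$ and $b$ has a kernel then $b\in\mathcal{D}$; (S$^{op}$) $\mathcal{D}$ is closed under direct sums of morphisms. *)

theory Defs
  imports Main
begin

record ('o, 'm) addcat =
  Ob   :: "'o set"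
  Mor  :: "'m set"
  Dom  :: "'m \<Rightarrow> 'o"
  Cod  :: "'m \<Rightarrow> 'o"
  Cmp  :: "'m \<Rightarrow> 'm \<Rightarrow> 'm"   (* Cmp C g f = g after f *)
  Idm  :: "'o \<Rightarrow> 'm"
  Add  :: "'m \<Rightarrow> 'm \<Rightarrow> 'm"
  Neg  :: "'m \<Rightarrow> 'm"
  Zer  :: "'o \<Rightarrow> 'o \<Rightarrow> 'm"

definition hom :: "('o,'m,'x) addcat_scheme \<Rightarrow> 'm \<Rightarrow> 'o \<Rightarrow> 'o \<Rightarrow> bool" where
  "hom C f X Y \<longleftrightarrow> f \<in> Mor C \<and> Dom C f = X \<and> Cod C f = Y \<and> X \<in> Ob C \<and> Y \<in> Ob C"

definition category :: "('o,'m,'x) addcat_scheme \<Rightarrow> bool" where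
  "category C \<longleftrightarrow>
     (\<forall>f\<in>Mor C. Dom C f \<in> Ob C \<and> Cod C f \<in> Ob C) \<and>
     (\<forall>X\<in>Ob C. hom C (Idm C X) X X) \<and>
     (\<forall>f g X Y Z. hom C f X Y \<longrightarrow> hom C g Y Z \<longrightarrow> hom C (Cmp C g f) X Z) \<and>
     (\<forall>f g h W X Y Z. hom C f W X \<longrightarrow> hom C g X Y \<longrightarrow> hom C h Y Z \<longrightarrow>
        Cmp C h (Cmp C g f) = Cmp C (Cmp C h g) f) \<and>
     (\<forall>f X Y. hom C f X Y \<longrightarrow> Cmp C f (Idm C X) = f \<and> Cmp C (Idm C Y) f = f)"

definition preadditive :: "('o,'m,'x) addcat_scheme \<Rightarrow> bool" where
  "preadditive C \<longleftrightarrow> category C \<and>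
     (\<forall>X\<in>Ob C. \<forall>Y\<in>Ob C.
        hom C (Zer C X Y) X Y \<and>
        (\<forall>f g. hom C f X Y \<longrightarrow> hom C g X Y \<longrightarrow> hom C (Add C f g) X Y) \<and>
        (\<forall>f. hom C f X Y \<longrightarrow> hom C (Neg C f) X Y) \<and>
        (\<forall>f g h. hom C f X Y \<longrightarrow> hom C g X Y \<longrightarrow> hom C h X Y \<longrightarrow>
            Add C (Add C f g) h = Add C f (Add C g h)) \<and>
        (\<forall>f g. hom C f X Y \<longrightarrow> hom C g X Y \<longrightarrow> Add C f g = Add C g f) \<and>
        (\<forall>f. hom C f X Y \<longrightarrow> Add C f (Zer C X Y) = f) \<and>
        (\<forall>f. hom C f X Y \<longrightarrow> Add C f (Neg C f) = Zer C X Y)) \<and>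
     (\<forall>f g h X Y Z. hom C f X Y \<longrightarrow> hom C g X Y \<longrightarrow> hom C h Y Z \<longrightarrow>
        Cmp C h (Add C f g) = Add C (Cmp C h f) (Cmp C h g)) \<and>
     (\<forall>f g h X Y Z. hom C h X Y \<longrightarrow> hom C f Y Z \<longrightarrow> hom C g Y Z \<longrightarrow>
        Cmp C (Add C f g) h = Add C (Cmp C f h) (Cmp C g h))"

definition zero_object :: "('o,'m,'x) addcat_scheme \<Rightarrow> 'o \<Rightarrow> bool" where
  "zero_object C Z \<longleftrightarrow> Z \<in> Ob C \<and>
     (\<forall>X\<in>Ob C. (\<exists>!f. hom C f Z X) \<and> (\<exists>!f. hom C f X Z))"

definition biproduct :: "('o,'m,'x) addcat_scheme \<Rightarrow> 'o \<Rightarrow> 'o \<Rightarrow> 'o \<Rightarrow> 'm \<Rightarrow> 'm \<Rightarrow> 'm \<Rightarrow> 'm \<Rightarrow> bool" where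
  "biproduct C X1 X2 X i1 i2 p1 p2 \<longleftrightarrow>
     hom C i1 X1 X \<and> hom C i2 X2 X \<and> hom C p1 X X1 \<and> hom C p2 X X2 \<and>
     Cmp C p1 i1 = Idm C X1 \<and> Cmp C p2 i2 = Idm C X2 \<and>
     Cmp C p2 i1 = Zer C X1 X2 \<and> Cmp C p1 i2 = Zer C X2 X1 \<and>
     Add C (Cmp C i1 p1) (Cmp C i2 p2) = Idm C X"

definition additive :: "('o,'m,'x) addcat_scheme \<Rightarrow> bool" where
  "additive C \<longleftrightarrow> preadditive C \<and> (\<exists>Z. zero_object C Z) \<and>
     (\<forall>X1\<in>Ob C. \<forall>X2\<in>Ob C. \<exists>X i1 i2 p1 p2. biproduct C X1 X2 X i1 i2 p1 p2)"

definition is_kernel :: "('o,'m,'x) addcat_scheme \<Rightarrow> 'm \<Rightarrow> 'm \<Rightarrow> bool" where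
  "is_kernel C i d \<longleftrightarrow> (\<exists>A B D. hom C i A B \<and> hom C d B D \<and> Cmp C d i = Zer C A D \<and>
     (\<forall>X g. hom C g X B \<longrightarrow> Cmp C d g = Zer C X D \<longrightarrow> (\<exists>!h. hom C h X A \<and> Cmp C i h = g)))"

definition is_cokernel :: "('o,'m,'x) addcat_scheme \<Rightarrow> 'm \<Rightarrow> 'm \<Rightarrow> bool" where
  "is_cokernel C d i \<longleftrightarrow> (\<exists>A B D. hom C i A B \<and> hom C d B D \<and> Cmp C d i = Zer C A D \<and>
     (\<forall>X g. hom C g B X \<longrightarrow> Cmp C g i = Zer C A X \<longrightarrow> (\<exists>!h. hom C h D X \<and> Cmp C h d = g)))"

definition is_iso :: "('o,'m,'x) addcat_scheme \<Rightarrow> 'm \<Rightarrow> bool" where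
  "is_iso C f \<longleftrightarrow> (\<exists>X Y g. hom C f X Y \<and> hom C g Y X \<and> Cmp C g f = Idm C X \<and> Cmp C f g = Idm C Y)"

definition iso_arrows :: "('o,'m,'x) addcat_scheme \<Rightarrow> 'm \<Rightarrow> 'm \<Rightarrow> bool" where
  "iso_arrows C f f' \<longleftrightarrow> (\<exists>X Y X' Y' a b. hom C f X Y \<and> hom C f' X' Y' \<and>
     hom C a X X' \<and> hom C b Y Y' \<and> is_iso C a \<and> is_iso C b \<and> Cmp C f' a = Cmp C b f)"

definition is_pushout :: "('o,'m,'x) addcat_scheme \<Rightarrow> 'm \<Rightarrow> 'm \<Rightarrow> 'm \<Rightarrow> 'm \<Rightarrow> bool" where
  "is_pushout C f h h' f' \<longleftrightarrow> (\<exists>X Y X' P. hom C f X Y \<and> hom C h X X' \<and> hom C h' Y P \<and>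
     hom C f' X' P \<and> Cmp C h' f = Cmp C f' h \<and>
     (\<forall>Q u v. hom C u Y Q \<longrightarrow> hom C v X' Q \<longrightarrow> Cmp C u f = Cmp C v h \<longrightarrow>
        (\<exists>!w. hom C w P Q \<and> Cmp C w h' = u \<and> Cmp C w f' = v)))"

definition is_pullback :: "('o,'m,'x) addcat_scheme \<Rightarrow> 'm \<Rightarrow> 'm \<Rightarrow> 'm \<Rightarrow> 'm \<Rightarrow> bool" where
  "is_pullback C g t t' g' \<longleftrightarrow> (\<exists>X Y Z P. hom C g Y Z \<and> hom C t X Z \<and> hom C t' P Y \<and>
     hom C g' P X \<and> Cmp C g t' = Cmp C t g' \<and>
     (\<forall>Q u v. hom C u Q Y \<longrightarrow> hom C v Q X \<longrightarrow> Cmp C g u = Cmp C t v \<longrightarrow>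
        (\<exists>!w. hom C w Q P \<and> Cmp C t' w = u \<and> Cmp C g' w = v)))"

definition dsum_mor :: "('o,'m,'x) addcat_scheme \<Rightarrow> 'm \<Rightarrow> 'm \<Rightarrow> 'm \<Rightarrow> bool" where
  "dsum_mor C f f1 f2 \<longleftrightarrow> (\<exists>X1 X2 X Y1 Y2 Y i1 i2 p1 p2 j1 j2 q1 q2.
     hom C f1 X1 Y1 \<and> hom C f2 X2 Y2 \<and>
     biproduct C X1 X2 X i1 i2 p1 p2 \<and> biproduct C Y1 Y2 Y j1 j2 q1 q2 \<and>
     f = Add C (Cmp C j1 (Cmp C f1 p1)) (Cmp C j2 (Cmp C f2 p2)))"

definition dsum_seq :: "('o,'m,'x) addcat_scheme \<Rightarrow> 'm \<times> 'm \<Rightarrow> 'm \<times> 'm \<Rightarrow> 'm \<times> 'm \<Rightarrow> bool" where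
  "dsum_seq C s s1 s2 \<longleftrightarrow> (case (s, s1, s2) of ((i, d), (i1, d1), (i2, d2)) \<Rightarrow>
     (\<exists>A1 A2 A B1 B2 B C1 C2 CC a1 a2 pa1 pa2 b1 b2 pb1 pb2 c1 c2 pc1 pc2.
       hom C i1 A1 B1 \<and> hom C d1 B1 C1 \<and> hom C i2 A2 B2 \<and> hom C d2 B2 C2 \<and>
       biproduct C A1 A2 A a1 a2 pa1 pa2 \<and> biproduct C B1 B2 B b1 b2 pb1 pb2 \<and>
       biproduct C C1 C2 CC c1 c2 pc1 pc2 \<and>
       i = Add C (Cmp C b1 (Cmp C i1 pa1)) (Cmp C b2 (Cmp C i2 pa2)) \<and>
       d = Add C (Cmp C c1 (Cmp C d1 pb1)) (Cmp C c2 (Cmp C d2 pb2))))"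

definition iso_seq :: "('o,'m,'x) addcat_scheme \<Rightarrow> 'm \<times> 'm \<Rightarrow> 'm \<times> 'm \<Rightarrow> bool" where
  "iso_seq C s s' \<longleftrightarrow> (case (s, s') of ((i, d), (i', d')) \<Rightarrow>
     (\<exists>A B D A' B' D' a b c. hom C i A B \<and> hom C d B D \<and> hom C i' A' B' \<and> hom C d' B' D' \<and>
        hom C a A A' \<and> hom C b B B' \<and> hom C c D D' \<and> is_iso C a \<and> is_iso C b \<and> is_iso C c \<and>
        Cmp C b i = Cmp C i' a \<and> Cmp C c d = Cmp C d' b))"

definition kc_pair :: "('o,'m,'x) addcat_scheme \<Rightarrow> 'm \<Rightarrow> 'm \<Rightarrow> bool" where
  "kc_pair C i d \<longleftrightarrow> is_kernel C i d \<and> is_cokernel C d i"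


definition weakly_exact :: "('o,'m,'x) addcat_scheme \<Rightarrow> ('m \<times> 'm) set \<Rightarrow> bool" where
  "weakly_exact C W \<longleftrightarrow>
     (\<forall>(i, d)\<in>W. kc_pair C i d) \<and>
     (\<forall>s s'. s \<in> W \<longrightarrow> iso_seq C s s' \<longrightarrow> s' \<in> W) \<and>
     (\<forall>s s1 s2. s1 \<in> W \<longrightarrow> s2 \<in> W \<longrightarrow> dsum_seq C s s1 s2 \<longrightarrow> s \<in> W) \<and>
     (\<forall>A\<in>Ob C. \<exists>d. (Idm C A, d) \<in> W) \<and>
     (\<forall>A\<in>Ob C. \<exists>i. (i, Idm C A) \<in> W) \<and>
     (\<forall>i t A B D. (\<exists>d. (i, d) \<in> W) \<longrightarrow> hom C i A B \<longrightarrow> hom C t A D \<longrightarrow>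
        (\<exists>h' f'. is_pushout C i t h' f') \<and>
        (\<forall>h' f'. is_pushout C i t h' f' \<longrightarrow> (\<exists>d. (f', d) \<in> W))) \<and>
     (\<forall>h t A B D. (\<exists>i. (i, h) \<in> W) \<longrightarrow> hom C h A D \<longrightarrow> hom C t B D \<longrightarrow>
        (\<exists>t' g'. is_pullback C h t t' g') \<and>
        (\<forall>t' g'. is_pullback C h t t' g' \<longrightarrow> (\<exists>i. (i, g') \<in> W)))"

definition right_weakly_exact :: "('o,'m,'x) addcat_scheme \<Rightarrow> 'm set \<Rightarrow> bool" where
  "right_weakly_exact C I \<longleftrightarrow>
     (\<forall>f\<in>I. \<exists>d. is_kernel C f d) \<and>
     (\<forall>f f'. f \<in> I \<longrightarrow> iso_arrows C f f' \<longrightarrow> f' \<in> I) \<and>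
     (\<forall>X\<in>Ob C. Idm C X \<in> I) \<and>
     (\<forall>Z X. zero_object C Z \<longrightarrow> X \<in> Ob C \<longrightarrow> Zer C Z X \<in> I) \<and>
     (\<forall>f h X Y X'. f \<in> I \<longrightarrow> hom C f X Y \<longrightarrow> hom C h X X' \<longrightarrow>
        (\<exists>h' f'. is_pushout C f h h' f') \<and>
        (\<forall>h' f'. is_pushout C f h h' f' \<longrightarrow> f' \<in> I)) \<and>
     (\<forall>a b A B D. hom C a A B \<longrightarrow> hom C b B D \<longrightarrow> Cmp C b a \<in> I \<longrightarrow>
        (\<exists>c. is_cokernel C c a) \<longrightarrow> a \<in> I) \<and>
     (\<forall>f f1 f2. f1 \<in> I \<longrightarrow> f2 \<in> I \<longrightarrow> dsum_mor C f f1 f2 \<longrightarrow> f \<in> I)"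

definition left_weakly_exact :: "('o,'m,'x) addcat_scheme \<Rightarrow> 'm set \<Rightarrow> bool" where
  "left_weakly_exact C D \<longleftrightarrow>
     (\<forall>f\<in>D. \<exists>i. is_cokernel C f i) \<and>
     (\<forall>f f'. f \<in> D \<longrightarrow> iso_arrows C f f' \<longrightarrow> f' \<in> D) \<and>
     (\<forall>X\<in>Ob C. Idm C X \<in> D) \<and>
     (\<forall>Z X. zero_object C Z \<longrightarrow> X \<in> Ob C \<longrightarrow> Zer C X Z \<in> D) \<and>
     (\<forall>g t Y Z X. g \<in> D \<longrightarrow> hom C g Y Z \<longrightarrow> hom C t X Z \<longrightarrow>
        (\<exists>t' g'. is_pullback C g t t' g') \<and>
        (\<forall>t' g'. is_pullback C g t t' g' \<longrightarrow> g' \<in> D)) \<and>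
     (\<forall>a b A B E. hom C a A B \<longrightarrow> hom C b B E \<longrightarrow> Cmp C b a \<in> D \<longrightarrow>
        (\<exists>k. is_kernel C k b) \<longrightarrow> b \<in> D) \<and>
     (\<forall>f f1 f2. f1 \<in> D \<longrightarrow> f2 \<in> D \<longrightarrow> dsum_mor C f f1 f2 \<longrightarrow> f \<in> D)"

end

theory Submission
  imports Defs
begin

locale addc = fixes C :: "('o,'m) addcat" assumes add: "additive C"
begin

lemma pre: "preadditive C"
  using add unfolding additive_def by (rule conjunct1)
lemma cat: "category C"
  using pre unfolding preadditive_def by (rule conjunct1)

lemma catD1: "\<forall>X\<in>Ob C. hom C (Idm C X) X X"
  using cat unfolding category_def by (elim conjE) assumption
lemma catD2: "\<forall>f g X Y Z. hom C f X Y \<longrightarrow> hom C g Y Z \<longrightarrow> hom C (Cmp C g f) X Z"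
  using cat unfolding category_def by (elim conjE) assumption
lemma catD3: "\<forall>f g h W X Y Z. hom C f W X \<longrightarrow> hom C g X Y \<longrightarrow> hom C h Y Z \<longrightarrow>
        Cmp C h (Cmp C g f) = Cmp C (Cmp C h g) f"
  using cat unfolding category_def by (elim conjE) assumption
lemma catD4: "\<forall>f X Y. hom C f X Y \<longrightarrow> Cmp C f (Idm C X) = f \<and> Cmp C (Idm C Y) f = f"
  using cat unfolding category_def by (elim conjE) assumption

lemma preD1: "\<forall>X\<in>Ob C. \<forall>Y\<in>Ob C.
        hom C (Zer C X Y) X Y \<and>
        (\<forall>f g. hom C f X Y \<longrightarrow> hom C g X Y \<longrightarrow> hom C (Add C f g) X Y) \<and>
        (\<forall>f. hom C f X Y \<longrightarrow> hom C (Neg C f) X Y) \<and>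
        (\<forall>f g h. hom C f X Y \<longrightarrow> hom C g X Y \<longrightarrow> hom C h X Y \<longrightarrow>
            Add C (Add C f g) h = Add C f (Add C g h)) \<and>
        (\<forall>f g. hom C f X Y \<longrightarrow> hom C g X Y \<longrightarrow> Add C f g = Add C g f) \<and>
        (\<forall>f. hom C f X Y \<longrightarrow> Add C f (Zer C X Y) = f) \<and>
        (\<forall>f. hom C f X Y \<longrightarrow> Add C f (Neg C f) = Zer C X Y)"
  using pre unfolding preadditive_def by (elim conjE) assumption
lemma preD2: "\<forall>f g h X Y Z. hom C f X Y \<longrightarrow> hom C g X Y \<longrightarrow> hom C h Y Z \<longrightarrow>
        Cmp C h (Add C f g) = Add C (Cmp C h f) (Cmp C h g)"
  using pre unfolding preadditive_def by (elim conjE) assumption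
lemma preD3: "\<forall>f g h X Y Z. hom C h X Y \<longrightarrow> hom C f Y Z \<longrightarrow> hom C g Y Z \<longrightarrow>
        Cmp C (Add C f g) h = Add C (Cmp C f h) (Cmp C g h)"
  using pre unfolding preadditive_def by (elim conjE) assumption

lemma hom_obj: "hom C f X Y \<Longrightarrow> X \<in> Ob C \<and> Y \<in> Ob C"
  by (simp add: hom_def)
lemma hom_uniq: "hom C f X Y \<Longrightarrow> hom C f X' Y' \<Longrightarrow> X' = X \<and> Y' = Y"
  by (simp add: hom_def)

lemma id_hom: "X \<in> Ob C \<Longrightarrow> hom C (Idm C X) X X"
  using catD1 by blast
lemma comp_hom: "hom C f X Y \<Longrightarrow> hom C g Y Z \<Longrightarrow> hom C (Cmp C g f) X Z"
  using catD2 by blast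
lemma assoc: "hom C f W X \<Longrightarrow> hom C g X Y \<Longrightarrow> hom C h Y Z \<Longrightarrow>
   Cmp C (Cmp C h g) f = Cmp C h (Cmp C g f)"
  using catD3 by metis
lemma idr: "hom C f X Y \<Longrightarrow> Cmp C f (Idm C X) = f"
  using catD4 by blast
lemma idl: "hom C f X Y \<Longrightarrow> Cmp C (Idm C Y) f = f"
  using catD4 by blast

lemma zer_hom: "X \<in> Ob C \<Longrightarrow> Y \<in> Ob C \<Longrightarrow> hom C (Zer C X Y) X Y"
  using preD1 by blast
lemma add_hom: "hom C f X Y \<Longrightarrow> hom C g X Y \<Longrightarrow> hom C (Add C f g) X Y"
  using preD1 hom_obj by meson
lemma neg_hom: "hom C f X Y \<Longrightarrow> hom C (Neg C f) X Y"
  using preD1 hom_obj by meson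
lemma add_assoc: "hom C f X Y \<Longrightarrow> hom C g X Y \<Longrightarrow> hom C h X Y \<Longrightarrow>
   Add C (Add C f g) h = Add C f (Add C g h)"
  using preD1 hom_obj by meson
lemma add_comm: "hom C f X Y \<Longrightarrow> hom C g X Y \<Longrightarrow> Add C f g = Add C g f"
  using preD1 hom_obj by meson
lemma add_zer: "hom C f X Y \<Longrightarrow> Add C f (Zer C X Y) = f"
  using preD1 hom_obj by meson
lemma add_neg: "hom C f X Y \<Longrightarrow> Add C f (Neg C f) = Zer C X Y"
  using preD1 hom_obj by meson
lemma distl: "hom C f X Y \<Longrightarrow> hom C g X Y \<Longrightarrow> hom C h Y Z \<Longrightarrow>
        Cmp C h (Add C f g) = Add C (Cmp C h f) (Cmp C h g)"
  using preD2 by blast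
lemma distr: "hom C h X Y \<Longrightarrow> hom C f Y Z \<Longrightarrow> hom C g Y Z \<Longrightarrow>
        Cmp C (Add C f g) h = Add C (Cmp C f h) (Cmp C g h)"
  using preD3 by blast

lemma zer_add: "hom C f X Y \<Longrightarrow> Add C (Zer C X Y) f = f"
  by (metis add_comm add_zer hom_obj zer_hom)

lemma idem_zero:
  assumes f: "hom C f X Y" and e: "Add C f f = f" shows "f = Zer C X Y"
proof -
  have n: "hom C (Neg C f) X Y" using neg_hom f .
  have "f = Add C f (Zer C X Y)" using add_zer f by simp
  also have "\<dots> = Add C f (Add C f (Neg C f))" using add_neg f by simp
  also have "\<dots> = Add C (Add C f f) (Neg C f)" using add_assoc f n by simp
  also have "\<dots> = Zer C X Y" using e add_neg f by simp
  finally show ?thesis .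
qed

lemma zer_compl: "hom C h Y Z \<Longrightarrow> X \<in> Ob C \<Longrightarrow> Cmp C h (Zer C X Y) = Zer C X Z"
proof -
  assume h: "hom C h Y Z" and X: "X \<in> Ob C"
  have z: "hom C (Zer C X Y) X Y" using zer_hom X h hom_obj by blast
  have "Cmp C h (Zer C X Y) = Cmp C h (Add C (Zer C X Y) (Zer C X Y))" using add_zer z by simp
  also have "\<dots> = Add C (Cmp C h (Zer C X Y)) (Cmp C h (Zer C X Y))" using distl z h by blast
  finally show ?thesis using idem_zero comp_hom z h by metis
qed

lemma zer_compr: "hom C h X Y \<Longrightarrow> Z \<in> Ob C \<Longrightarrow> Cmp C (Zer C Y Z) h = Zer C X Z"
proof -
  assume h: "hom C h X Y" and Z: "Z \<in> Ob C"
  have z: "hom C (Zer C Y Z) Y Z" using zer_hom Z h hom_obj by blast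
  have "Cmp C (Zer C Y Z) h = Cmp C (Add C (Zer C Y Z) (Zer C Y Z)) h" using add_zer z by simp
  also have "\<dots> = Add C (Cmp C (Zer C Y Z) h) (Cmp C (Zer C Y Z) h)" using distr z h by blast
  finally show ?thesis using idem_zero comp_hom z h by metis
qed

lemma Mor_Ob: "f \<in> Mor C \<Longrightarrow> Dom C f \<in> Ob C" "f \<in> Mor C \<Longrightarrow> Cod C f \<in> Ob C"
  using cat unfolding category_def by blast+

lemma homI: "f \<in> Mor C \<Longrightarrow> Dom C f = X \<Longrightarrow> Cod C f = Y \<Longrightarrow> hom C f X Y"
  using Mor_Ob by (auto simp: hom_def)

lemma t_comp: "f \<in> Mor C \<Longrightarrow> g \<in> Mor C \<Longrightarrow> Cod C f = Dom C g \<Longrightarrow>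
   Cmp C g f \<in> Mor C \<and> Dom C (Cmp C g f) = Dom C f \<and> Cod C (Cmp C g f) = Cod C g"
  using comp_hom[of f "Dom C f" "Cod C f" g "Cod C g"] homI by (auto simp: hom_def)

lemma t_assoc: "f \<in> Mor C \<Longrightarrow> g \<in> Mor C \<Longrightarrow> h \<in> Mor C \<Longrightarrow> Cod C f = Dom C g \<Longrightarrow> Cod C g = Dom C h \<Longrightarrow>
   Cmp C (Cmp C h g) f = Cmp C h (Cmp C g f)"
  by (rule assoc[OF homI[OF _ refl refl] homI[OF _ _ refl] homI[OF _ _ refl]]) simp_all

lemma t_add: "f \<in> Mor C \<Longrightarrow> g \<in> Mor C \<Longrightarrow> Dom C f = Dom C g \<Longrightarrow> Cod C f = Cod C g \<Longrightarrow>
   Add C f g \<in> Mor C \<and> Dom C (Add C f g) = Dom C f \<and> Cod C (Add C f g) = Cod C f"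
  using add_hom[of f "Dom C f" "Cod C f" g] homI by (auto simp: hom_def)

lemma t_zer: "X \<in> Ob C \<Longrightarrow> Y \<in> Ob C \<Longrightarrow>
   Zer C X Y \<in> Mor C \<and> Dom C (Zer C X Y) = X \<and> Cod C (Zer C X Y) = Y"
  using zer_hom by (auto simp: hom_def)

lemma t_id: "X \<in> Ob C \<Longrightarrow> Idm C X \<in> Mor C \<and> Dom C (Idm C X) = X \<and> Cod C (Idm C X) = X"
  using id_hom by (auto simp: hom_def)

lemma t_idl: "f \<in> Mor C \<Longrightarrow> Cod C f = Y \<Longrightarrow> Cmp C (Idm C Y) f = f"
  by (rule idl[OF homI[OF _ refl]])
lemma t_idr: "f \<in> Mor C \<Longrightarrow> Dom C f = X \<Longrightarrow> Cmp C f (Idm C X) = f"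
  by (rule idr[OF homI[OF _ _ refl]])

lemma t_zl: "h \<in> Mor C \<Longrightarrow> X \<in> Ob C \<Longrightarrow> Dom C h = Y \<Longrightarrow> Cmp C h (Zer C X Y) = Zer C X (Cod C h)"
  by (rule zer_compl[OF homI[OF _ _ refl]])
lemma t_zr: "h \<in> Mor C \<Longrightarrow> Z \<in> Ob C \<Longrightarrow> Cod C h = Y \<Longrightarrow> Cmp C (Zer C Y Z) h = Zer C (Dom C h) Z"
  by (rule zer_compr[OF homI[OF _ refl]])

lemma t_distl: "f \<in> Mor C \<Longrightarrow> g \<in> Mor C \<Longrightarrow> h \<in> Mor C \<Longrightarrow> Dom C f = Dom C g \<Longrightarrow> Cod C f = Cod C g \<Longrightarrow> Cod C f = Dom C h \<Longrightarrow>
  Cmp C h (Add C f g) = Add C (Cmp C h f) (Cmp C h g)"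
  by (rule distl[OF homI[OF _ refl refl] homI[OF _ _ _] homI[OF _ _ refl]]) simp_all
lemma t_distr: "f \<in> Mor C \<Longrightarrow> g \<in> Mor C \<Longrightarrow> h \<in> Mor C \<Longrightarrow> Dom C f = Dom C g \<Longrightarrow> Cod C f = Cod C g \<Longrightarrow> Cod C h = Dom C f \<Longrightarrow>
  Cmp C (Add C f g) h = Add C (Cmp C f h) (Cmp C g h)"
  by (rule distr[OF homI[OF _ refl refl] homI[OF _ _ refl] homI[OF _ _ _]]) simp_all

lemma t_addz: "f \<in> Mor C \<Longrightarrow> X = Dom C f \<Longrightarrow> Y = Cod C f \<Longrightarrow> Add C f (Zer C X Y) = f"
  by (rule add_zer[OF homI]) simp_all
lemma t_zadd: "f \<in> Mor C \<Longrightarrow> X = Dom C f \<Longrightarrow> Y = Cod C f \<Longrightarrow> Add C (Zer C X Y) f = f"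
  by (rule zer_add[OF homI]) simp_all

lemma t_inv: "Cmp C g f = Idm C X \<Longrightarrow> f \<in> Mor C \<Longrightarrow> g \<in> Mor C \<Longrightarrow> Cod C f = Dom C g \<Longrightarrow> Dom C f = X \<Longrightarrow>
   h \<in> Mor C \<Longrightarrow> Cod C h = X \<Longrightarrow> Cmp C g (Cmp C f h) = h"
  using t_assoc[of h f g] t_idl[of h X] by simp

lemma t_zc: "Cmp C g f = Zer C X Y \<Longrightarrow> Y \<in> Ob C \<Longrightarrow> f \<in> Mor C \<Longrightarrow> g \<in> Mor C \<Longrightarrow> Cod C f = Dom C g \<Longrightarrow> Dom C f = X \<Longrightarrow>
   h \<in> Mor C \<Longrightarrow> Cod C h = X \<Longrightarrow> Cmp C g (Cmp C f h) = Zer C (Dom C h) Y"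
  using t_assoc[of h f g] t_zr[of h Y X] Mor_Ob by simp

lemmas ts = t_comp t_assoc t_add t_zer t_id t_idl t_idr t_zl t_zr Mor_Ob hom_def

end

context addc begin

lemma kerI: "hom C i A B \<Longrightarrow> hom C d B D \<Longrightarrow> Cmp C d i = Zer C A D \<Longrightarrow>
  (\<And>X g. hom C g X B \<Longrightarrow> Cmp C d g = Zer C X D \<Longrightarrow> \<exists>!h. hom C h X A \<and> Cmp C i h = g) \<Longrightarrow>
  is_kernel C i d"
  unfolding is_kernel_def by blast

lemma kerD: assumes "is_kernel C i d" "hom C i A B" "hom C d B D"
  shows "Cmp C d i = Zer C A D"
    "\<And>X g. hom C g X B \<Longrightarrow> Cmp C d g = Zer C X D \<Longrightarrow> \<exists>!h. hom C h X A \<and> Cmp C i h = g"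
proof -
  obtain A' B' D' where h: "hom C i A' B'" "hom C d B' D'" "Cmp C d i = Zer C A' D'" and
    u: "\<forall>X g. hom C g X B' \<longrightarrow> Cmp C d g = Zer C X D' \<longrightarrow> (\<exists>!h. hom C h X A' \<and> Cmp C i h = g)"
    using assms(1) unfolding is_kernel_def by blast
  have "A' = A" "B' = B" "D' = D" using hom_uniq h assms by blast+
  then show "Cmp C d i = Zer C A D"
    "\<And>X g. hom C g X B \<Longrightarrow> Cmp C d g = Zer C X D \<Longrightarrow> \<exists>!h. hom C h X A \<and> Cmp C i h = g"
    using h u by auto
qed

lemma cokI: "hom C i A B \<Longrightarrow> hom C d B D \<Longrightarrow> Cmp C d i = Zer C A D \<Longrightarrow>
  (\<And>X g. hom C g B X \<Longrightarrow> Cmp C g i = Zer C A X \<Longrightarrow> \<exists>!h. hom C h D X \<and> Cmp C h d = g) \<Longrightarrow>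
  is_cokernel C d i"
  unfolding is_cokernel_def by blast

lemma cokD: assumes "is_cokernel C d i" "hom C i A B" "hom C d B D"
  shows "Cmp C d i = Zer C A D"
    "\<And>X g. hom C g B X \<Longrightarrow> Cmp C g i = Zer C A X \<Longrightarrow> \<exists>!h. hom C h D X \<and> Cmp C h d = g"
proof -
  obtain A' B' D' where h: "hom C i A' B'" "hom C d B' D'" "Cmp C d i = Zer C A' D'" and
    u: "\<forall>X g. hom C g B' X \<longrightarrow> Cmp C g i = Zer C A' X \<longrightarrow> (\<exists>!h. hom C h D' X \<and> Cmp C h d = g)"
    using assms(1) unfolding is_cokernel_def by blast
  have "A' = A" "B' = B" "D' = D" using hom_uniq h assms by blast+
  then show "Cmp C d i = Zer C A D"
    "\<And>X g. hom C g B X \<Longrightarrow> Cmp C g i = Zer C A X \<Longrightarrow> \<exists>!h. hom C h D X \<and> Cmp C h d = g"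
    using h u by auto
qed

lemma ker_homs: "is_kernel C i d \<Longrightarrow> \<exists>A B D. hom C i A B \<and> hom C d B D"
  unfolding is_kernel_def by blast
lemma cok_homs: "is_cokernel C d i \<Longrightarrow> \<exists>A B D. hom C i A B \<and> hom C d B D"
  unfolding is_cokernel_def by blast

lemma iso_inv: assumes "is_iso C f" "hom C f X Y"
  shows "\<exists>g. hom C g Y X \<and> Cmp C g f = Idm C X \<and> Cmp C f g = Idm C Y"
proof -
  obtain X' Y' g where "hom C f X' Y'" "hom C g Y' X'" "Cmp C g f = Idm C X'" "Cmp C f g = Idm C Y'"
    using assms(1) unfolding is_iso_def by blast
  moreover have "X' = X" "Y' = Y" using hom_uniq assms(2) calculation by blast+
  ultimately show ?thesis by blast
qed

lemma ker_iso: assumes k: "is_kernel C i d" and s: "iso_seq C (i,d) (i',d')"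
  shows "is_kernel C i' d'"
proof -
  obtain A B D A' B' D' a b c where h: "hom C i A B" "hom C d B D" "hom C i' A' B'" "hom C d' B' D'"
     "hom C a A A'" "hom C b B B'" "hom C c D D'" and isos: "is_iso C a" "is_iso C b" "is_iso C c"
     and e: "Cmp C b i = Cmp C i' a" "Cmp C c d = Cmp C d' b"
    using s unfolding iso_seq_def by auto
  obtain a' where a': "hom C a' A' A" "Cmp C a' a = Idm C A" "Cmp C a a' = Idm C A'" using iso_inv isos(1) h(5) by blast
  obtain b' where b': "hom C b' B' B" "Cmp C b' b = Idm C B" "Cmp C b b' = Idm C B'" using iso_inv isos(2) h(6) by blast
  obtain c' where c': "hom C c' D' D" "Cmp C c' c = Idm C D" "Cmp C c c' = Idm C D'" using iso_inv isos(3) h(7) by blast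
  note H = h a'(1) b'(1) c'(1)
  have k0: "Cmp C d i = Zer C A D" using kerD(1)[OF k h(1) h(2)] .
  have e1: "i' = Cmp C (Cmp C b i) a'" unfolding e(1) using H a'(3) by (simp add: ts)
  have zero: "Cmp C d' i' = Zer C A' D'"
  proof -
    have "Cmp C d' i' = Cmp C (Cmp C d' b) (Cmp C i a')" unfolding e1 using H by (simp add: ts)
    also have "... = Cmp C c (Cmp C (Cmp C d i) a')" unfolding e(2)[symmetric] using H by (simp add: ts)
    also have "... = Zer C A' D'" unfolding k0 using H by (simp add: ts)
    finally show ?thesis .
  qed
  show ?thesis
  proof (rule kerI[OF h(3) h(4) zero])
    fix X g assume g: "hom C g X B'" "Cmp C d' g = Zer C X D'"
    have g0: "hom C (Cmp C b' g) X B" using comp_hom g(1) b'(1) .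
    have "Cmp C d (Cmp C b' g) = Cmp C c' (Cmp C (Cmp C c d) (Cmp C b' g))"
      using H g t_inv[OF c'(2)] by (simp add: ts)
    also have "... = Cmp C c' (Cmp C d' (Cmp C (Cmp C b b') g))" unfolding e(2) using H g by (simp add: ts)
    also have "... = Zer C X D" unfolding b'(3) using H g by (simp add: ts)
    finally have "Cmp C d (Cmp C b' g) = Zer C X D" .
    then obtain h0 where h0: "hom C h0 X A" "Cmp C i h0 = Cmp C b' g"
      and uq: "\<And>h. hom C h X A \<Longrightarrow> Cmp C i h = Cmp C b' g \<Longrightarrow> h = h0"
      using kerD(2)[OF k h(1) h(2) g0] by blast
    show "\<exists>!h. hom C h X A' \<and> Cmp C i' h = g"
    proof (rule ex1I[of _ "Cmp C a h0"])
      have "Cmp C i' (Cmp C a h0) = Cmp C (Cmp C i' a) h0" using H h0 by (simp add: ts)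
      also have "... = Cmp C b (Cmp C i h0)" unfolding e(1)[symmetric] using H h0 by (simp add: ts)
      also have "... = g" unfolding h0(2) using H g t_inv[OF b'(3)] by (simp add: ts)
      finally show "hom C (Cmp C a h0) X A' \<and> Cmp C i' (Cmp C a h0) = g"
        using comp_hom h0(1) h(5) by blast
    next
      fix h1 assume h1: "hom C h1 X A' \<and> Cmp C i' h1 = g"
      have "Cmp C i (Cmp C a' h1) = Cmp C b' (Cmp C (Cmp C b i) (Cmp C a' h1))"
        using H h1 t_inv[OF b'(2)] by (simp add: ts)
      also have "... = Cmp C b' (Cmp C i' (Cmp C (Cmp C a a') h1))" unfolding e(1) using H h1 by (simp add: ts)
      also have "... = Cmp C b' g" unfolding a'(3) using H h1 by (simp add: ts)
      finally have "Cmp C a' h1 = h0" using uq comp_hom h1 a'(1) by blast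
      then show "h1 = Cmp C a h0" using H h1 t_inv[OF a'(3)] by (auto simp add: ts)
    qed
  qed
qed

end

context addc begin

lemma bpD: assumes "biproduct C X1 X2 X i1 i2 p1 p2"
  shows "hom C i1 X1 X" "hom C i2 X2 X" "hom C p1 X X1" "hom C p2 X X2"
     "Cmp C p1 i1 = Idm C X1" "Cmp C p2 i2 = Idm C X2"
     "Cmp C p2 i1 = Zer C X1 X2" "Cmp C p1 i2 = Zer C X2 X1"
     "Add C (Cmp C i1 p1) (Cmp C i2 p2) = Idm C X"
  using assms unfolding biproduct_def by blast+

lemma bp_decomp: assumes bp: "biproduct C X1 X2 X i1 i2 p1 p2" and f: "hom C f Y X"
  shows "f = Add C (Cmp C i1 (Cmp C p1 f)) (Cmp C i2 (Cmp C p2 f))"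
proof -
  note B = bpD[OF bp]
  have "f = Cmp C (Add C (Cmp C i1 p1) (Cmp C i2 p2)) f" unfolding B(9) using f idl by simp
  also have "... = Add C (Cmp C i1 (Cmp C p1 f)) (Cmp C i2 (Cmp C p2 f))"
    using B(1-4) f by (simp add: ts t_distr)
  finally show ?thesis .
qed

lemma bp_ext: assumes bp: "biproduct C X1 X2 X i1 i2 p1 p2" and f: "hom C f Y X" and g: "hom C g Y X"
  and "Cmp C p1 f = Cmp C p1 g" "Cmp C p2 f = Cmp C p2 g" shows "f = g"
  using bp_decomp[OF bp f] bp_decomp[OF bp g] assms(4,5) by simp

lemma bp_proj: assumes bp: "biproduct C X1 X2 X i1 i2 p1 p2" and x: "hom C x Z X1" and y: "hom C y Z X2"
  shows "Cmp C p1 (Add C (Cmp C i1 x) (Cmp C i2 y)) = x" "Cmp C p2 (Add C (Cmp C i1 x) (Cmp C i2 y)) = y"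
proof -
  note B = bpD[OF bp]
  show "Cmp C p1 (Add C (Cmp C i1 x) (Cmp C i2 y)) = x"
    using B x y t_inv[OF B(5)] t_zc[OF B(8)] by (simp add: ts t_distl t_addz)
  show "Cmp C p2 (Add C (Cmp C i1 x) (Cmp C i2 y)) = y"
    using B x y t_inv[OF B(6)] t_zc[OF B(7)] by (simp add: ts t_distl t_zadd)
qed

lemma ker_dsum: assumes ds: "dsum_seq C (i,d) (i1,d1) (i2,d2)" and k1: "is_kernel C i1 d1"
  and k2: "is_kernel C i2 d2" shows "is_kernel C i d"
proof -
  obtain A1 A2 A B1 B2 B C1 C2 CC a1 a2 pa1 pa2 b1 b2 pb1 pb2 c1 c2 pc1 pc2 where
    h: "hom C i1 A1 B1" "hom C d1 B1 C1" "hom C i2 A2 B2" "hom C d2 B2 C2" and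
    bA: "biproduct C A1 A2 A a1 a2 pa1 pa2" and bB: "biproduct C B1 B2 B b1 b2 pb1 pb2" and
    bC: "biproduct C C1 C2 CC c1 c2 pc1 pc2" and
    ie: "i = Add C (Cmp C b1 (Cmp C i1 pa1)) (Cmp C b2 (Cmp C i2 pa2))" and
    de: "d = Add C (Cmp C c1 (Cmp C d1 pb1)) (Cmp C c2 (Cmp C d2 pb2))"
    using ds unfolding dsum_seq_def by auto
  note BA = bpD[OF bA] and BB = bpD[OF bB] and BC = bpD[OF bC]
  note H = h BA(1-4) BB(1-4) BC(1-4)
  have hi: "hom C i A B" unfolding ie using H by (simp add: ts)
  have hd: "hom C d B CC" unfolding de using H by (simp add: ts)
  have z1: "Cmp C d1 i1 = Zer C A1 C1" using kerD(1)[OF k1 h(1) h(2)] .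
  have z2: "Cmp C d2 i2 = Zer C A2 C2" using kerD(1)[OF k2 h(3) h(4)] .
  have pi1: "Cmp C pb1 i = Cmp C i1 pa1" unfolding ie using bp_proj(1)[OF bB comp_hom[OF BA(3) h(1)] comp_hom[OF BA(4) h(3)]] .
  have pi2: "Cmp C pb2 i = Cmp C i2 pa2" unfolding ie using bp_proj(2)[OF bB comp_hom[OF BA(3) h(1)] comp_hom[OF BA(4) h(3)]] .
  have pd1: "Cmp C pc1 d = Cmp C d1 pb1" unfolding de using bp_proj(1)[OF bC comp_hom[OF BB(3) h(2)] comp_hom[OF BB(4) h(4)]] .
  have pd2: "Cmp C pc2 d = Cmp C d2 pb2" unfolding de using bp_proj(2)[OF bC comp_hom[OF BB(3) h(2)] comp_hom[OF BB(4) h(4)]] .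
  have zero: "Cmp C d i = Zer C A CC"
  proof (rule bp_ext[OF bC])
    show "hom C (Cmp C d i) A CC" using comp_hom hi hd .
    show "hom C (Zer C A CC) A CC" using zer_hom hi hd hom_obj by blast
    have "Cmp C pc1 (Cmp C d i) = Cmp C (Cmp C pc1 d) i" using H hi hd by (simp add: ts)
    also have "... = Cmp C d1 (Cmp C pb1 i)" unfolding pd1 using H hi hd by (simp add: ts)
    also have "... = Cmp C (Cmp C d1 i1) pa1" unfolding pi1 using H hi hd by (simp add: ts)
    also have "... = Cmp C pc1 (Zer C A CC)" unfolding z1 using H hi hd by (simp add: ts)
    finally show "Cmp C pc1 (Cmp C d i) = Cmp C pc1 (Zer C A CC)" .
    have "Cmp C pc2 (Cmp C d i) = Cmp C (Cmp C pc2 d) i" using H hi hd by (simp add: ts)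
    also have "... = Cmp C d2 (Cmp C pb2 i)" unfolding pd2 using H hi hd by (simp add: ts)
    also have "... = Cmp C (Cmp C d2 i2) pa2" unfolding pi2 using H hi hd by (simp add: ts)
    also have "... = Cmp C pc2 (Zer C A CC)" unfolding z2 using H hi hd by (simp add: ts)
    finally show "Cmp C pc2 (Cmp C d i) = Cmp C pc2 (Zer C A CC)" .
  qed
  show ?thesis
  proof (rule kerI[OF hi hd zero])
    fix X g assume g: "hom C g X B" "Cmp C d g = Zer C X CC"
    have g1: "Cmp C d1 (Cmp C pb1 g) = Zer C X C1"
    proof -
      have "Cmp C d1 (Cmp C pb1 g) = Cmp C (Cmp C pc1 d) g" unfolding pd1 using H g by (simp add: ts)
      also have "... = Zer C X C1" using H hd g by (simp add: ts)
      finally show ?thesis .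
    qed
    have g2: "Cmp C d2 (Cmp C pb2 g) = Zer C X C2"
    proof -
      have "Cmp C d2 (Cmp C pb2 g) = Cmp C (Cmp C pc2 d) g" unfolding pd2 using H g by (simp add: ts)
      also have "... = Zer C X C2" using H hd g by (simp add: ts)
      finally show ?thesis .
    qed
    obtain h1 where h1: "hom C h1 X A1" "Cmp C i1 h1 = Cmp C pb1 g"
      and u1: "\<And>h. hom C h X A1 \<Longrightarrow> Cmp C i1 h = Cmp C pb1 g \<Longrightarrow> h = h1"
      using kerD(2)[OF k1 h(1) h(2) comp_hom[OF g(1) BB(3)] g1] by blast
    obtain h2 where h2: "hom C h2 X A2" "Cmp C i2 h2 = Cmp C pb2 g"
      and u2: "\<And>h. hom C h X A2 \<Longrightarrow> Cmp C i2 h = Cmp C pb2 g \<Longrightarrow> h = h2"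
      using kerD(2)[OF k2 h(3) h(4) comp_hom[OF g(1) BB(4)] g2] by blast
    let ?h = "Add C (Cmp C a1 h1) (Cmp C a2 h2)"
    have hh: "hom C ?h X A" using H h1 h2 by (simp add: ts)
    have ph1: "Cmp C pa1 ?h = h1" using bp_proj(1)[OF bA h1(1) h2(1)] .
    have ph2: "Cmp C pa2 ?h = h2" using bp_proj(2)[OF bA h1(1) h2(1)] .
    show "\<exists>!h. hom C h X A \<and> Cmp C i h = g"
    proof (rule ex1I[of _ ?h])
      have "Cmp C i ?h = g"
      proof (rule bp_ext[OF bB])
        show "hom C (Cmp C i ?h) X B" using comp_hom hh hi .
        show "hom C g X B" using g(1) .
        have "Cmp C pb1 (Cmp C i ?h) = Cmp C (Cmp C pb1 i) ?h" using H hi hh by (simp add: ts)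
        also have "... = Cmp C i1 (Cmp C pa1 ?h)" unfolding pi1 using H hh by (simp add: ts)
        finally have "Cmp C pb1 (Cmp C i ?h) = Cmp C i1 (Cmp C pa1 ?h)" .
        then show "Cmp C pb1 (Cmp C i ?h) = Cmp C pb1 g" unfolding ph1 h1(2) .
        have "Cmp C pb2 (Cmp C i ?h) = Cmp C (Cmp C pb2 i) ?h" using H hi hh by (simp add: ts)
        also have "... = Cmp C i2 (Cmp C pa2 ?h)" unfolding pi2 using H hh by (simp add: ts)
        finally have "Cmp C pb2 (Cmp C i ?h) = Cmp C i2 (Cmp C pa2 ?h)" .
        then show "Cmp C pb2 (Cmp C i ?h) = Cmp C pb2 g" unfolding ph2 h2(2) .
      qed
      then show "hom C ?h X A \<and> Cmp C i ?h = g" using hh by blast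
    next
      fix h assume hy: "hom C h X A \<and> Cmp C i h = g"
      have q1: "Cmp C pa1 h = h1"
      proof (rule u1)
        show "hom C (Cmp C pa1 h) X A1" using comp_hom hy BA(3) by blast
        have "Cmp C pb1 (Cmp C i h) = Cmp C (Cmp C pb1 i) h" using H hi hy by (simp add: ts)
        also have "... = Cmp C i1 (Cmp C pa1 h)" unfolding pi1 using H hy by (simp add: ts)
        finally have "Cmp C i1 (Cmp C pa1 h) = Cmp C pb1 (Cmp C i h)" ..
        then show "Cmp C i1 (Cmp C pa1 h) = Cmp C pb1 g" using hy by simp
      qed
      have q2: "Cmp C pa2 h = h2"
      proof (rule u2)
        show "hom C (Cmp C pa2 h) X A2" using comp_hom hy BA(4) by blast
        have "Cmp C pb2 (Cmp C i h) = Cmp C (Cmp C pb2 i) h" using H hi hy by (simp add: ts)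
        also have "... = Cmp C i2 (Cmp C pa2 h)" unfolding pi2 using H hy by (simp add: ts)
        finally have "Cmp C i2 (Cmp C pa2 h) = Cmp C pb2 (Cmp C i h)" ..
        then show "Cmp C i2 (Cmp C pa2 h) = Cmp C pb2 g" using hy by simp
      qed
      show "h = ?h" by (rule bp_ext[OF bA]) (use hy hh q1 q2 ph1 ph2 in auto)
    qed
  qed
qed

end

context addc begin

lemma kc_zero: assumes Z: "zero_object C Z" and A: "A \<in> Ob C"
  shows "kc_pair C (Idm C A) (Zer C A Z)"
proof -
  have ZO: "Z \<in> Ob C" and zu: "\<forall>X\<in>Ob C. (\<exists>!f. hom C f Z X) \<and> (\<exists>!f. hom C f X Z)"
    using Z unfolding zero_object_def by blast+
  have hi: "hom C (Idm C A) A A" using id_hom A .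
  have hd: "hom C (Zer C A Z) A Z" using zer_hom A ZO .
  have zero: "Cmp C (Zer C A Z) (Idm C A) = Zer C A Z" using idr hd .
  have k: "is_kernel C (Idm C A) (Zer C A Z)"
  proof (rule kerI[OF hi hd zero])
    fix X g assume g: "hom C g X A" "Cmp C (Zer C A Z) g = Zer C X Z"
    show "\<exists>!h. hom C h X A \<and> Cmp C (Idm C A) h = g"
      by (rule ex1I[of _ g]) (use g idl in auto)
  qed
  have c: "is_cokernel C (Zer C A Z) (Idm C A)"
  proof (rule cokI[OF hi hd zero])
    fix X g assume g: "hom C g A X" "Cmp C g (Idm C A) = Zer C A X"
    have X: "X \<in> Ob C" using g hom_obj by blast
    have ge: "g = Zer C A X" using g idr by metis
    have hz: "hom C (Zer C Z X) Z X" using zer_hom ZO X .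
    have u: "\<And>h. hom C h Z X \<Longrightarrow> h = Zer C Z X" using zu X hz by blast
    show "\<exists>!h. hom C h Z X \<and> Cmp C h (Zer C A Z) = g"
    proof (rule ex1I[of _ "Zer C Z X"])
      show "hom C (Zer C Z X) Z X \<and> Cmp C (Zer C Z X) (Zer C A Z) = g"
        using hz zer_compr[OF hd X] ge by simp
    next
      fix h assume "hom C h Z X \<and> Cmp C h (Zer C A Z) = g" then show "h = Zer C Z X" using u by blast
    qed
  qed
  show ?thesis using k c unfolding kc_pair_def by blast
qed

lemma pushout_kc:
  assumes kcp: "kc_pair C i d" and iI: "i \<in> I" and dD: "d \<in> D" and hi: "hom C i A B" and ht: "hom C t A D0"
    and Ik: "\<forall>f\<in>I. \<exists>d. is_kernel C f d"
    and IP: "\<forall>f h X Y X'. f \<in> I \<longrightarrow> hom C f X Y \<longrightarrow> hom C h X X' \<longrightarrow>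
        (\<exists>h' f'. is_pushout C f h h' f') \<and> (\<forall>h' f'. is_pushout C f h h' f' \<longrightarrow> f' \<in> I)"
    and DQ: "\<forall>a b A B E. hom C a A B \<longrightarrow> hom C b B E \<longrightarrow> Cmp C b a \<in> D \<longrightarrow>
        (\<exists>k. is_kernel C k b) \<longrightarrow> b \<in> D"
  shows "(\<exists>h' f'. is_pushout C i t h' f') \<and>
     (\<forall>h' f'. is_pushout C i t h' f' \<longrightarrow> (\<exists>d'. kc_pair C f' d' \<and> f' \<in> I \<and> d' \<in> D))"
proof (intro conjI allI impI)
  show "\<exists>h' f'. is_pushout C i t h' f'" using IP iI hi ht by blast
  fix h' f' assume po: "is_pushout C i t h' f'"
  have f'I: "f' \<in> I" using IP iI hi ht po by blast
  obtain X Y X' S where p: "hom C i X Y" "hom C t X X'" "hom C h' Y S" "hom C f' X' S"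
    "Cmp C h' i = Cmp C f' t" and pu: "\<forall>Q u v. hom C u Y Q \<longrightarrow> hom C v X' Q \<longrightarrow> Cmp C u i = Cmp C v t \<longrightarrow>
        (\<exists>!w. hom C w S Q \<and> Cmp C w h' = u \<and> Cmp C w f' = v)"
    using po unfolding is_pushout_def by blast
  have "X = A" "Y = B" "X' = D0" using hom_uniq p hi ht by blast+
  then have hh: "hom C h' B S" "hom C f' D0 S" and sq: "Cmp C h' i = Cmp C f' t"
    and pu: "\<And>Q u v. hom C u B Q \<Longrightarrow> hom C v D0 Q \<Longrightarrow> Cmp C u i = Cmp C v t \<Longrightarrow>
        (\<exists>!w. hom C w S Q \<and> Cmp C w h' = u \<and> Cmp C w f' = v)"
    using p pu by auto
  have ki: "is_kernel C i d" and cd: "is_cokernel C d i" using kcp unfolding kc_pair_def by auto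
  obtain A1 B1 E where "hom C i A1 B1" "hom C d B1 E" using ker_homs[OF ki] by blast
  then have hd: "hom C d B E" using hom_uniq hi by blast
  have di: "Cmp C d i = Zer C A E" using kerD(1)[OF ki hi hd] .
  obtain k where kk: "is_kernel C f' k" using Ik f'I by blast
  obtain A2 S2 K where "hom C f' A2 S2" "hom C k S2 K" using ker_homs[OF kk] by blast
  then have hk: "hom C k S K" using hom_uniq hh by blast
  have kf: "Cmp C k f' = Zer C D0 K" using kerD(1)[OF kk hh(2) hk] .
  have E: "E \<in> Ob C" and D0: "D0 \<in> Ob C" and AO: "A \<in> Ob C" using hd ht hom_obj by blast+
  have hz: "hom C (Zer C D0 E) D0 E" using zer_hom D0 E .
  obtain d' where d': "hom C d' S E" "Cmp C d' h' = d" "Cmp C d' f' = Zer C D0 E"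
    using pu[OF hd hz] di zer_compr[OF ht E] by auto
  have zero: "Cmp C d' f' = Zer C D0 E" using d'(3) .
  have cok: "is_cokernel C d' f'"
  proof (rule cokI[OF hh(2) d'(1) zero])
    fix X g assume g: "hom C g S X" "Cmp C g f' = Zer C D0 X"
    have XO: "X \<in> Ob C" using g hom_obj by blast
    have gh: "hom C (Cmp C g h') B X" using comp_hom hh(1) g(1) .
    have ghi: "Cmp C (Cmp C g h') i = Zer C A X"
    proof -
      have "Cmp C (Cmp C g h') i = Cmp C g (Cmp C h' i)" using assoc hi hh g by blast
      also have "... = Cmp C (Cmp C g f') t" unfolding sq using assoc ht hh g by metis
      also have "... = Zer C A X" unfolding g(2) using zer_compr ht XO by blast
      finally show ?thesis .
    qed
    obtain u where u: "hom C u E X" "Cmp C u d = Cmp C g h'"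
      and uu: "\<And>h. hom C h E X \<Longrightarrow> Cmp C h d = Cmp C g h' \<Longrightarrow> h = u"
      using cokD(2)[OF cd hi hd gh ghi] by blast
    have hz2: "hom C (Zer C D0 X) D0 X" using zer_hom D0 XO .
    have sqz: "Cmp C (Cmp C g h') i = Cmp C (Zer C D0 X) t" using ghi zer_compr[OF ht XO] by simp
    have w1: "\<And>w1 w2. hom C w1 S X \<and> Cmp C w1 h' = Cmp C g h' \<and> Cmp C w1 f' = Zer C D0 X \<Longrightarrow>
       hom C w2 S X \<and> Cmp C w2 h' = Cmp C g h' \<and> Cmp C w2 f' = Zer C D0 X \<Longrightarrow> w1 = w2"
      using pu[OF gh hz2 sqz] by blast
    show "\<exists>!h. hom C h E X \<and> Cmp C h d' = g"
    proof (rule ex1I[of _ u])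
      have ud: "hom C (Cmp C u d') S X" using comp_hom d'(1) u(1) .
      have a1: "Cmp C (Cmp C u d') h' = Cmp C g h'" using assoc[OF hh(1) d'(1) u(1)] d'(2) u(2) by simp
      have a2: "Cmp C (Cmp C u d') f' = Zer C D0 X"
        using assoc[OF hh(2) d'(1) u(1)] d'(3) zer_compl[OF u(1) D0] by simp
      have "Cmp C u d' = g" by (rule w1) (use ud a1 a2 g in simp_all)
      then show "hom C u E X \<and> Cmp C u d' = g" using u by blast
    next
      fix h assume h: "hom C h E X \<and> Cmp C h d' = g"
      have "Cmp C h d = Cmp C g h'" using h assoc[OF hh(1) d'(1), of h X] d'(2) by auto
      then show "h = u" using uu h by blast
    qed
  qed
  have ker: "is_kernel C f' d'"
  proof (rule kerI[OF hh(2) d'(1) zero])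
    fix X g assume g: "hom C g X S" "Cmp C d' g = Zer C X E"
    have XO: "X \<in> Ob C" using g hom_obj by blast
    obtain v where v: "hom C v E K" "Cmp C v d' = k"
      using cokD(2)[OF cok hh(2) d'(1) hk kf] by blast
    have "Cmp C k g = Zer C X K"
    proof -
      have "Cmp C k g = Cmp C v (Cmp C d' g)" using v assoc[OF g(1) d'(1) v(1)] by simp
      also have "... = Zer C X K" unfolding g(2) using zer_compl[OF v(1) XO] .
      finally show ?thesis .
    qed
    then show "\<exists>!h. hom C h X D0 \<and> Cmp C f' h = g" using kerD(2)[OF kk hh(2) hk g(1)] by blast
  qed
  have "d' \<in> D" using DQ hh(1) d'(1) d'(2) dD ker by metis
  then show "\<exists>d'. kc_pair C f' d' \<and> f' \<in> I \<and> d' \<in> D" using ker cok f'I unfolding kc_pair_def by blast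
qed

end

definition opc :: "('o,'m) addcat \<Rightarrow> ('o,'m) addcat" where
  "opc C = \<lparr>Ob = Ob C, Mor = Mor C, Dom = Cod C, Cod = Dom C, Cmp = (\<lambda>g f. Cmp C f g),
     Idm = Idm C, Add = Add C, Neg = Neg C, Zer = (\<lambda>X Y. Zer C Y X)\<rparr>"

lemma opc_simps[simp]: "Ob (opc C) = Ob C" "Mor (opc C) = Mor C" "Dom (opc C) = Cod C" "Cod (opc C) = Dom C"
  "Cmp (opc C) g f = Cmp C f g" "Idm (opc C) = Idm C" "Add (opc C) = Add C" "Neg (opc C) = Neg C"
  "Zer (opc C) X Y = Zer C Y X"
  by (simp_all add: opc_def)

lemma hom_op[simp]: "hom (opc C) f X Y = hom C f Y X"
  by (auto simp: hom_def)

lemma ker_op: "is_kernel (opc C) f g = is_cokernel C f g"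
  unfolding is_kernel_def is_cokernel_def by auto

lemma cok_op: "is_cokernel (opc C) f g = is_kernel C f g"
  unfolding is_kernel_def is_cokernel_def by auto

lemma kc_op: "kc_pair (opc C) d i = kc_pair C i d"
  unfolding kc_pair_def ker_op cok_op by auto

lemma po_op: "is_pushout (opc C) f h h' f' = is_pullback C f h h' f'"
  unfolding is_pushout_def is_pullback_def by auto

lemma zo_op: "zero_object (opc C) Z = zero_object C Z"
  unfolding zero_object_def by auto

lemma iso_op: "is_iso (opc C) f = is_iso C f"
  unfolding is_iso_def by auto

lemma bp_op: "biproduct (opc C) X1 X2 X i1 i2 p1 p2 = biproduct C X1 X2 X p1 p2 i1 i2"
  unfolding biproduct_def by auto

context addc begin

lemma cat_op: "category (opc C)"
  unfolding category_def
proof (intro conjI ballI allI impI)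
  show "\<And>f. f \<in> Mor (opc C) \<Longrightarrow> Dom (opc C) f \<in> Ob (opc C)" using Mor_Ob by simp
  show "\<And>f. f \<in> Mor (opc C) \<Longrightarrow> Cod (opc C) f \<in> Ob (opc C)" using Mor_Ob by simp
  show "\<And>X. X \<in> Ob (opc C) \<Longrightarrow> hom (opc C) (Idm (opc C) X) X X" using id_hom by simp
  show "\<And>f g X Y Z. hom (opc C) f X Y \<Longrightarrow> hom (opc C) g Y Z \<Longrightarrow> hom (opc C) (Cmp (opc C) g f) X Z"
    using comp_hom by simp
  show "\<And>f g h W X Y Z. hom (opc C) f W X \<Longrightarrow> hom (opc C) g X Y \<Longrightarrow> hom (opc C) h Y Z \<Longrightarrow>
     Cmp (opc C) h (Cmp (opc C) g f) = Cmp (opc C) (Cmp (opc C) h g) f"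
    using assoc by simp
  show "\<And>f X Y. hom (opc C) f X Y \<Longrightarrow> Cmp (opc C) f (Idm (opc C) X) = f"
    using idl by simp
  show "\<And>f X Y. hom (opc C) f X Y \<Longrightarrow> Cmp (opc C) (Idm (opc C) Y) f = f"
    using idr by simp
qed

lemma pre_op: "preadditive (opc C)"
  unfolding preadditive_def
proof (intro conjI ballI allI impI cat_op)
  fix X Y assume "X \<in> Ob (opc C)" "Y \<in> Ob (opc C)"
  then have XY: "X \<in> Ob C" "Y \<in> Ob C" by simp_all
  show "hom (opc C) (Zer (opc C) X Y) X Y" using zer_hom XY by simp
  show "\<And>f g. hom (opc C) f X Y \<Longrightarrow> hom (opc C) g X Y \<Longrightarrow> hom (opc C) (Add (opc C) f g) X Y"
    using add_hom by simp
  show "\<And>f. hom (opc C) f X Y \<Longrightarrow> hom (opc C) (Neg (opc C) f) X Y" using neg_hom by simp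
  show "\<And>f g h. hom (opc C) f X Y \<Longrightarrow> hom (opc C) g X Y \<Longrightarrow> hom (opc C) h X Y \<Longrightarrow>
     Add (opc C) (Add (opc C) f g) h = Add (opc C) f (Add (opc C) g h)" using add_assoc by simp
  show "\<And>f g. hom (opc C) f X Y \<Longrightarrow> hom (opc C) g X Y \<Longrightarrow> Add (opc C) f g = Add (opc C) g f"
    using add_comm by simp
  show "\<And>f. hom (opc C) f X Y \<Longrightarrow> Add (opc C) f (Zer (opc C) X Y) = f" using add_zer by simp
  show "\<And>f. hom (opc C) f X Y \<Longrightarrow> Add (opc C) f (Neg (opc C) f) = Zer (opc C) X Y" using add_neg by simp
next
  show "\<And>f g h X Y Z. hom (opc C) f X Y \<Longrightarrow> hom (opc C) g X Y \<Longrightarrow> hom (opc C) h Y Z \<Longrightarrow>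
       Cmp (opc C) h (Add (opc C) f g) = Add (opc C) (Cmp (opc C) h f) (Cmp (opc C) h g)"
    using distr by simp
  show "\<And>f g h X Y Z. hom (opc C) h X Y \<Longrightarrow> hom (opc C) f Y Z \<Longrightarrow> hom (opc C) g Y Z \<Longrightarrow>
       Cmp (opc C) (Add (opc C) f g) h = Add (opc C) (Cmp (opc C) f h) (Cmp (opc C) g h)"
    using distl by simp
qed

lemma additive_op: "additive (opc C)"
proof -
  obtain Z where "zero_object C Z" using add unfolding additive_def by blast
  then have z: "zero_object (opc C) Z" by (simp add: zo_op)
  have b: "\<forall>X1\<in>Ob C. \<forall>X2\<in>Ob C. \<exists>X i1 i2 p1 p2. biproduct C X1 X2 X i1 i2 p1 p2"
    using add unfolding additive_def by blast
  have "\<forall>X1\<in>Ob (opc C). \<forall>X2\<in>Ob (opc C). \<exists>X i1 i2 p1 p2. biproduct (opc C) X1 X2 X i1 i2 p1 p2"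
  proof (intro ballI)
    fix X1 X2 assume "X1 \<in> Ob (opc C)" "X2 \<in> Ob (opc C)"
    then have "X1 \<in> Ob C" "X2 \<in> Ob C" by simp_all
    then have "\<exists>X i1 i2 p1 p2. biproduct C X1 X2 X i1 i2 p1 p2" using b by blast
    then obtain X i1 i2 p1 p2 where "biproduct C X1 X2 X i1 i2 p1 p2" by blast
    then have "biproduct (opc C) X1 X2 X p1 p2 i1 i2" by (simp add: bp_op)
    then show "\<exists>X i1 i2 p1 p2. biproduct (opc C) X1 X2 X i1 i2 p1 p2" by blast
  qed
  then show ?thesis unfolding additive_def using pre_op z by blast
qed

lemma iso_seq_op: assumes s: "iso_seq C (i,d) (i',d')" shows "iso_seq (opc C) (d,i) (d',i')"
proof -
  obtain A B D A' B' D' a b c where h: "hom C i A B" "hom C d B D" "hom C i' A' B'" "hom C d' B' D'"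
     "hom C a A A'" "hom C b B B'" "hom C c D D'" and isos: "is_iso C a" "is_iso C b" "is_iso C c"
     and e: "Cmp C b i = Cmp C i' a" "Cmp C c d = Cmp C d' b"
    using s unfolding iso_seq_def by auto
  obtain a' where a': "hom C a' A' A" "Cmp C a' a = Idm C A" "Cmp C a a' = Idm C A'" using iso_inv isos(1) h(5) by blast
  obtain b' where b': "hom C b' B' B" "Cmp C b' b = Idm C B" "Cmp C b b' = Idm C B'" using iso_inv isos(2) h(6) by blast
  obtain c' where c': "hom C c' D' D" "Cmp C c' c = Idm C D" "Cmp C c c' = Idm C D'" using iso_inv isos(3) h(7) by blast
  note H = h a'(1) b'(1) c'(1)
  have ia: "is_iso C a'" "is_iso C b'" "is_iso C c'" unfolding is_iso_def using a' b' c' h by blast+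
  have e1: "Cmp C d b' = Cmp C c' d'"
  proof -
    have "Cmp C c' d' = Cmp C c' (Cmp C (Cmp C d' b) b')" using H b'(3) by (simp add: ts t_idr)
    also have "... = Cmp C d b'" unfolding e(2)[symmetric] using H t_inv[OF c'(2)] by (simp add: ts)
    finally show ?thesis by simp
  qed
  have e2: "Cmp C i a' = Cmp C b' i'"
  proof -
    have "Cmp C b' i' = Cmp C b' (Cmp C (Cmp C i' a) a')" using H a'(3) by (simp add: ts t_idr)
    also have "... = Cmp C i a'" unfolding e(1)[symmetric] using H t_inv[OF b'(2)] by (simp add: ts)
    finally show ?thesis by simp
  qed
  show ?thesis unfolding iso_seq_def using H ia e1 e2 by (simp add: iso_op) blast
qed

lemma dsum_seq_op: assumes ds: "dsum_seq C (i,d) (i1,d1) (i2,d2)"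
  shows "dsum_seq (opc C) (d,i) (d1,i1) (d2,i2)"
proof -
  obtain A1 A2 A B1 B2 B C1 C2 CC a1 a2 pa1 pa2 b1 b2 pb1 pb2 c1 c2 pc1 pc2 where
    h: "hom C i1 A1 B1" "hom C d1 B1 C1" "hom C i2 A2 B2" "hom C d2 B2 C2" and
    bA: "biproduct C A1 A2 A a1 a2 pa1 pa2" and bB: "biproduct C B1 B2 B b1 b2 pb1 pb2" and
    bC: "biproduct C C1 C2 CC c1 c2 pc1 pc2" and
    ie: "i = Add C (Cmp C b1 (Cmp C i1 pa1)) (Cmp C b2 (Cmp C i2 pa2))" and
    de: "d = Add C (Cmp C c1 (Cmp C d1 pb1)) (Cmp C c2 (Cmp C d2 pb2))"
    using ds unfolding dsum_seq_def by auto
  note BA = bpD[OF bA] and BB = bpD[OF bB] and BC = bpD[OF bC]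
  note H = h BA(1-4) BB(1-4) BC(1-4)
  have ie': "i = Add C (Cmp C (Cmp C b1 i1) pa1) (Cmp C (Cmp C b2 i2) pa2)" unfolding ie using H by (simp add: ts)
  have de': "d = Add C (Cmp C (Cmp C c1 d1) pb1) (Cmp C (Cmp C c2 d2) pb2)" unfolding de using H by (simp add: ts)
  have bA': "biproduct (opc C) A1 A2 A pa1 pa2 a1 a2" using bA by (simp add: bp_op)
  have bB': "biproduct (opc C) B1 B2 B pb1 pb2 b1 b2" using bB by (simp add: bp_op)
  have bC': "biproduct (opc C) C1 C2 CC pc1 pc2 c1 c2" using bC by (simp add: bp_op)
  show ?thesis unfolding dsum_seq_def using h bA' bB' bC' ie' de' apply (simp only: prod.case opc_simps hom_op)
    apply (rule exI[of _ C1], rule exI[of _ C2], rule exI[of _ CC], rule exI[of _ B1], rule exI[of _ B2], rule exI[of _ B], rule exI[of _ A1], rule exI[of _ A2], rule exI[of _ A], rule exI[of _ pc1], rule exI[of _ pc2], rule exI[of _ c1], rule exI[of _ c2], rule exI[of _ pb1], rule exI[of _ pb2], rule exI[of _ b1], rule exI[of _ b2], rule exI[of _ pa1], rule exI[of _ pa2], rule exI[of _ a1], rule exI[of _ a2])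
    by simp
qed

end

theorem mainTheorem5:
  fixes C :: "('o, 'm) addcat" and D I :: "'m set"
  assumes "additive C"
    and "left_weakly_exact C D"
    and "right_weakly_exact C I"
  shows "weakly_exact C {(i, d). kc_pair C i d \<and> i \<in> I \<and> d \<in> D}"
proof -
  interpret addc C using assms(1) by (rule addc.intro)
  interpret O: addc "opc C" using additive_op by (rule addc.intro)
  have R1: "\<forall>f\<in>I. \<exists>d. is_kernel C f d"
    using assms(3) unfolding right_weakly_exact_def by (elim conjE) assumption
  have R2: "\<forall>f f'. f \<in> I \<longrightarrow> iso_arrows C f f' \<longrightarrow> f' \<in> I"
    using assms(3) unfolding right_weakly_exact_def by (elim conjE) assumption
  have R3: "\<forall>X\<in>Ob C. Idm C X \<in> I"
    using assms(3) unfolding right_weakly_exact_def by (elim conjE) assumption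
  have R4: "\<forall>Z X. zero_object C Z \<longrightarrow> X \<in> Ob C \<longrightarrow> Zer C Z X \<in> I"
    using assms(3) unfolding right_weakly_exact_def by (elim conjE) assumption
  have R5: "\<forall>f h X Y X'. f \<in> I \<longrightarrow> hom C f X Y \<longrightarrow> hom C h X X' \<longrightarrow>
        (\<exists>h' f'. is_pushout C f h h' f') \<and>
        (\<forall>h' f'. is_pushout C f h h' f' \<longrightarrow> f' \<in> I)"
    using assms(3) unfolding right_weakly_exact_def by (elim conjE) assumption
  have R6: "\<forall>a b A B D. hom C a A B \<longrightarrow> hom C b B D \<longrightarrow> Cmp C b a \<in> I \<longrightarrow>
        (\<exists>c. is_cokernel C c a) \<longrightarrow> a \<in> I"
    using assms(3) unfolding right_weakly_exact_def by (elim conjE) assumption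
  have R7: "\<forall>f f1 f2. f1 \<in> I \<longrightarrow> f2 \<in> I \<longrightarrow> dsum_mor C f f1 f2 \<longrightarrow> f \<in> I"
    using assms(3) unfolding right_weakly_exact_def by (elim conjE) assumption
  have L1: "\<forall>f\<in>D. \<exists>i. is_cokernel C f i"
    using assms(2) unfolding left_weakly_exact_def by (elim conjE) assumption
  have L2: "\<forall>f f'. f \<in> D \<longrightarrow> iso_arrows C f f' \<longrightarrow> f' \<in> D"
    using assms(2) unfolding left_weakly_exact_def by (elim conjE) assumption
  have L3: "\<forall>X\<in>Ob C. Idm C X \<in> D"
    using assms(2) unfolding left_weakly_exact_def by (elim conjE) assumption
  have L4: "\<forall>Z X. zero_object C Z \<longrightarrow> X \<in> Ob C \<longrightarrow> Zer C X Z \<in> D"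
    using assms(2) unfolding left_weakly_exact_def by (elim conjE) assumption
  have L5: "\<forall>g t Y Z X. g \<in> D \<longrightarrow> hom C g Y Z \<longrightarrow> hom C t X Z \<longrightarrow>
        (\<exists>t' g'. is_pullback C g t t' g') \<and>
        (\<forall>t' g'. is_pullback C g t t' g' \<longrightarrow> g' \<in> D)"
    using assms(2) unfolding left_weakly_exact_def by (elim conjE) assumption
  have L6: "\<forall>a b A B E. hom C a A B \<longrightarrow> hom C b B E \<longrightarrow> Cmp C b a \<in> D \<longrightarrow>
        (\<exists>k. is_kernel C k b) \<longrightarrow> b \<in> D"
    using assms(2) unfolding left_weakly_exact_def by (elim conjE) assumption
  have L7: "\<forall>f f1 f2. f1 \<in> D \<longrightarrow> f2 \<in> D \<longrightarrow> dsum_mor C f f1 f2 \<longrightarrow> f \<in> D"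
    using assms(2) unfolding left_weakly_exact_def by (elim conjE) assumption
  obtain Z where Z: "zero_object C Z" using assms(1) unfolding additive_def by blast
  let ?W = "{(i, d). kc_pair C i d \<and> i \<in> I \<and> d \<in> D}"
  show ?thesis unfolding weakly_exact_def
  proof (intro conjI)
    show "\<forall>(i, d)\<in>?W. kc_pair C i d" by auto
  next
    show "\<forall>s s'. s \<in> ?W \<longrightarrow> iso_seq C s s' \<longrightarrow> s' \<in> ?W"
    proof (intro allI impI)
      fix s s' assume sW: "s \<in> ?W" and iss: "iso_seq C s s'"
      obtain i d where s: "s = (i,d)" by (cases s)
      obtain i' d' where s': "s' = (i',d')" by (cases s')
      have kc: "kc_pair C i d" and iI: "i \<in> I" and dD: "d \<in> D" using sW s by auto
      have is': "iso_seq C (i,d) (i',d')" using iss s s' by simp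
      have k1: "is_kernel C i' d'" using ker_iso kc is' unfolding kc_pair_def by blast
      have "is_kernel (opc C) d i" using kc unfolding kc_pair_def ker_op by blast
      then have "is_kernel (opc C) d' i'" using O.ker_iso iso_seq_op[OF is'] by blast
      then have k2: "is_cokernel C d' i'" unfolding ker_op .
      obtain A B E A' B' E' a b c where h: "hom C i A B" "hom C d B E" "hom C i' A' B'" "hom C d' B' E'"
        "hom C a A A'" "hom C b B B'" "hom C c E E'" and isos: "is_iso C a" "is_iso C b" "is_iso C c"
        and e: "Cmp C b i = Cmp C i' a" "Cmp C c d = Cmp C d' b"
        using is' unfolding iso_seq_def by auto
      have "iso_arrows C i i'" unfolding iso_arrows_def using h isos e by metis
      then have "i' \<in> I" using R2 iI by blast
      moreover have "iso_arrows C d d'" unfolding iso_arrows_def using h isos e by metis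
      then have "d' \<in> D" using L2 dD by blast
      ultimately show "s' \<in> ?W" using k1 k2 s' unfolding kc_pair_def by blast
    qed
  next
    show "\<forall>s s1 s2. s1 \<in> ?W \<longrightarrow> s2 \<in> ?W \<longrightarrow> dsum_seq C s s1 s2 \<longrightarrow> s \<in> ?W"
    proof (intro allI impI)
      fix s s1 s2 assume s1W: "s1 \<in> ?W" and s2W: "s2 \<in> ?W" and ds: "dsum_seq C s s1 s2"
      obtain i d where s: "s = (i,d)" by (cases s)
      obtain i1 d1 where s1: "s1 = (i1,d1)" by (cases s1)
      obtain i2 d2 where s2: "s2 = (i2,d2)" by (cases s2)
      have kc1: "kc_pair C i1 d1" and i1I: "i1 \<in> I" and d1D: "d1 \<in> D" using s1W s1 by auto
      have kc2: "kc_pair C i2 d2" and i2I: "i2 \<in> I" and d2D: "d2 \<in> D" using s2W s2 by auto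
      have ds': "dsum_seq C (i,d) (i1,d1) (i2,d2)" using ds s s1 s2 by simp
      have k1: "is_kernel C i d" using ker_dsum[OF ds'] kc1 kc2 unfolding kc_pair_def by blast
      have "is_kernel (opc C) d i"
        using O.ker_dsum[OF dsum_seq_op[OF ds']] kc1 kc2 unfolding kc_pair_def ker_op by blast
      then have k2: "is_cokernel C d i" unfolding ker_op .
      obtain A1 A2 A B1 B2 B C1 C2 CC a1 a2 pa1 pa2 b1 b2 pb1 pb2 c1 c2 pc1 pc2 where
        h: "hom C i1 A1 B1" "hom C d1 B1 C1" "hom C i2 A2 B2" "hom C d2 B2 C2" and
        bA: "biproduct C A1 A2 A a1 a2 pa1 pa2" and bB: "biproduct C B1 B2 B b1 b2 pb1 pb2" and
        bC: "biproduct C C1 C2 CC c1 c2 pc1 pc2" and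
        ie: "i = Add C (Cmp C b1 (Cmp C i1 pa1)) (Cmp C b2 (Cmp C i2 pa2))" and
        de: "d = Add C (Cmp C c1 (Cmp C d1 pb1)) (Cmp C c2 (Cmp C d2 pb2))"
        using ds' unfolding dsum_seq_def by auto
      have "dsum_mor C i i1 i2" unfolding dsum_mor_def using h bA bB ie by blast
      then have "i \<in> I" using R7 i1I i2I by blast
      moreover have "dsum_mor C d d1 d2" unfolding dsum_mor_def using h bB bC de by blast
      then have "d \<in> D" using L7 d1D d2D by blast
      ultimately show "s \<in> ?W" using k1 k2 s unfolding kc_pair_def by blast
    qed
  next
    show "\<forall>A\<in>Ob C. \<exists>d. (Idm C A, d) \<in> ?W"
    proof
      fix A assume A: "A \<in> Ob C"
      have "(Idm C A, Zer C A Z) \<in> ?W" using kc_zero[OF Z A] R3 L4 Z A by blast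
      then show "\<exists>d. (Idm C A, d) \<in> ?W" by blast
    qed
  next
    show "\<forall>A\<in>Ob C. \<exists>i. (i, Idm C A) \<in> ?W"
    proof
      fix A assume A: "A \<in> Ob C"
      have "zero_object (opc C) Z" using Z by (simp add: zo_op)
      moreover have "A \<in> Ob (opc C)" using A by simp
      ultimately have "kc_pair (opc C) (Idm (opc C) A) (Zer (opc C) A Z)" by (rule O.kc_zero)
      then have "kc_pair C (Zer C Z A) (Idm C A)" by (simp add: kc_op)
      then have "(Zer C Z A, Idm C A) \<in> ?W" using R4 L3 Z A by blast
      then show "\<exists>i. (i, Idm C A) \<in> ?W" by blast
    qed
  next
    show "\<forall>i t A B D0. (\<exists>d. (i, d) \<in> ?W) \<longrightarrow> hom C i A B \<longrightarrow> hom C t A D0 \<longrightarrow>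
        (\<exists>h' f'. is_pushout C i t h' f') \<and>
        (\<forall>h' f'. is_pushout C i t h' f' \<longrightarrow> (\<exists>d. (f', d) \<in> ?W))"
    proof (intro allI impI)
      fix i t A B D0 assume "\<exists>d. (i, d) \<in> ?W" and hi: "hom C i A B" and ht: "hom C t A D0"
      then obtain d where kc: "kc_pair C i d" and iI: "i \<in> I" and dD: "d \<in> D" by blast
      have "(\<exists>h' f'. is_pushout C i t h' f') \<and>
       (\<forall>h' f'. is_pushout C i t h' f' \<longrightarrow> (\<exists>d'. kc_pair C f' d' \<and> f' \<in> I \<and> d' \<in> D))"
        by (rule pushout_kc[OF kc iI dD hi ht R1 R5 L6])
      then show "(\<exists>h' f'. is_pushout C i t h' f') \<and>
        (\<forall>h' f'. is_pushout C i t h' f' \<longrightarrow> (\<exists>d. (f', d) \<in> ?W))" by blast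
    qed
  next
    show "\<forall>h t A B D0. (\<exists>i. (i, h) \<in> ?W) \<longrightarrow> hom C h A D0 \<longrightarrow> hom C t B D0 \<longrightarrow>
        (\<exists>t' g'. is_pullback C h t t' g') \<and>
        (\<forall>t' g'. is_pullback C h t t' g' \<longrightarrow> (\<exists>i. (i, g') \<in> ?W))"
    proof (intro allI impI)
      fix h t A B D0 assume "\<exists>i. (i, h) \<in> ?W" and hh: "hom C h A D0" and ht: "hom C t B D0"
      then obtain i where kc: "kc_pair C i h" and iI: "i \<in> I" and hD: "h \<in> D" by blast
      have kc': "kc_pair (opc C) h i" using kc by (simp add: kc_op)
      have hh': "hom (opc C) h D0 A" using hh by simp
      have ht': "hom (opc C) t D0 B" using ht by simp
      have Ik: "\<forall>f\<in>D. \<exists>d. is_kernel (opc C) f d" using L1 by (simp add: ker_op)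
      have IP: "\<forall>f h X Y X'. f \<in> D \<longrightarrow> hom (opc C) f X Y \<longrightarrow> hom (opc C) h X X' \<longrightarrow>
        (\<exists>h' f'. is_pushout (opc C) f h h' f') \<and> (\<forall>h' f'. is_pushout (opc C) f h h' f' \<longrightarrow> f' \<in> D)"
        using L5 by (simp add: po_op)
      have DQ: "\<forall>a b A B E. hom (opc C) a A B \<longrightarrow> hom (opc C) b B E \<longrightarrow> Cmp (opc C) b a \<in> I \<longrightarrow>
        (\<exists>k. is_kernel (opc C) k b) \<longrightarrow> b \<in> I"
        using R6 by (simp add: ker_op) blast
      have "(\<exists>h' f'. is_pushout (opc C) h t h' f') \<and>
       (\<forall>h' f'. is_pushout (opc C) h t h' f' \<longrightarrow> (\<exists>d'. kc_pair (opc C) f' d' \<and> f' \<in> D \<and> d' \<in> I))"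
        by (rule O.pushout_kc[OF kc' hD iI hh' ht' Ik IP DQ])
      then show "(\<exists>t' g'. is_pullback C h t t' g') \<and>
        (\<forall>t' g'. is_pullback C h t t' g' \<longrightarrow> (\<exists>i. (i, g') \<in> ?W))"
        by (simp add: po_op kc_op) blast
    qed
  qed
qed


end
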